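(* Let $C=c_0c_1\dots c_{m-1}c_0$ and $D=(0)(1)\dots(n-1)(0)$ be reflexive digraph cycles with $D$ non-contractible, let $D$ have orientation string $y_1y_2\dots y_n$ and $C$ have orientation string $x_1\dots x_m$, and let $i\in\{1,\dots,n\}$ be such that $\mathrm{Mon}_1(C,D;i)$ is nonempty, with maximum element $\Phi_i^M$. There is a monotone one-step up edge from $\Phi_i^M$ to some map in $\mathrm{Mon}_1(C,D;i+1)$ if and only if $\sigma^i(D)\,y_{i+1} \leq^* C$ (subscripts of $y$ taken mod $n$ in $\{1,\dots,n\}$).
   Context: A digraph is a binary relation $\to$ on a finite vertex set; reflexive means every vertex has a loop. A digraph cycle $C=c_0c_1\dots c_{m-1}c_0$ (indices mod $m$, $m\ge3$) has underlying graph the cycle with edges $c_ic_{i+1}$; $D=(0)(1)\dots(n-1)(0)$ has vertex set the integers mod $n$; $D$ is non-contractible if it has length at least $4$ or is a directed $3$-cycle. The orientation string of $C$ is $x_1\dots x_m$ where $x_k$ is $+$, $-$ or $*$ according as the edge $c_{k-1}c_k$ is a forward arc only, a backward arc only, or symmetric (both directions); similarly $y_k$ describes the edge $(k-1)(k)$ of $D$. The shift $\sigma^i(D)$ is the string $y_{i+1}\dots y_ny_1\dots y_i$; juxtaposition denotes concatenation. For strings $Y=z_1\dots z_p$ and $X=x_1\dots x_q$, $Y\leq^* X$ means there is a strictly increasing $\alpha:\{1,\dots,p\}\to\{1,\dots,q\}$ with $z_j\in\{x_{\alpha(j)},*\}$ for all $j$. A homomorphism $\phi:C\to D$ satisfies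 $u\to v\Rightarrow\phi(u)\to\phi(v)$; $\mathrm{Hom}(C,D)$ is the digraph on homomorphisms with $\phi\to\phi'$ iff $\phi(u)\to\phi'(v)$ for all arcs $u\to v$ of $C$. Under $\phi$, edge $c_{k-1}c_k$ is increasing, stationary or decreasing as $\phi(c_k)-\phi(c_{k-1})$ is $1,0,-1$; the wind is (number of increasing minus decreasing edges)$/n$. $\mathrm{Mon}_1(C,D;i)$ is the set (induced subgraph) of wind-$1$ homomorphisms $\phi$ in which every edge is increasing or stationary and $\phi(c_0)=i$. For such $\phi$ there are exactly $n$ increasing edges $c_{k-1}c_k$, $k\in\{1,\dots,m\}$ (with $c_m=c_0$); list their indices as $\alpha_\phi(1)<\dots<\alpha_\phi(n)$. Order $\mathrm{Mon}_1(C,D;i)$ by $\phi\ge\phi'$ iff $\alpha_\phi(j)\le\alpha_{\phi'}(j)$ for all $j$; $\Phi_i^M$ denotes its maximum element (which exists when the set is nonempty). A monotone one-step up edge from $\phi$ to $\phi'$ (both wind-$1$ homomorphisms with all edges increasing or stationary) means: for some subpath of $C$ with vertex set $S$ all of whose edges are stationary under $\phi$ (so $\phi(S)=\{d\}$), $\phi'$ agrees with $\phi$ off $S$ and maps $S$ to $d+1$. *)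

theory Defs
  imports Complex_Main
begin

text \<open>Orientation symbols: Plus = forward arc only, Minus = backward arc only,
  Star = symmetric edge.\<close>
datatype orient = Plus | Minus | Star

text \<open>The reflexive digraph cycle with orientation string xs (length m \<ge> 3):
  vertices 0..m-1 (c_k is vertex k), and the edge between vertex u and vertex (u+1) mod m
  has orientation xs ! u (this is x_{u+1} in the paper's 1-based indexing).\<close>
definition cyc_arc :: "orient list \<Rightarrow> nat \<Rightarrow> nat \<Rightarrow> bool" where
  "cyc_arc xs u v \<longleftrightarrow> u < length xs \<and> v < length xs \<and>
     (u = v
      \<or> (v = (u + 1) mod length xs \<and> xs ! u \<in> {Plus, Star})
      \<or> (u = (v + 1) mod length xs \<and> xs ! v \<in> {Minus, Star}))"

definition non_contractible :: "orient list \<Rightarrow> bool" where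
  "non_contractible ys \<longleftrightarrow> length ys \<ge> 4 \<or>
     (length ys = 3 \<and> (ys = [Plus, Plus, Plus] \<or> ys = [Minus, Minus, Minus]))"

definition is_hom :: "orient list \<Rightarrow> orient list \<Rightarrow> (nat \<Rightarrow> nat) \<Rightarrow> bool" where
  "is_hom xs ys \<phi> \<longleftrightarrow> (\<forall>u < length xs. \<phi> u < length ys) \<and>
     (\<forall>u v. cyc_arc xs u v \<longrightarrow> cyc_arc ys (\<phi> u) (\<phi> v))"

text \<open>Edge k (k \<in> {1..m}) is c_{k-1} c_k with c_m = c_0.\<close>
definition increasing_edge :: "orient list \<Rightarrow> orient list \<Rightarrow> (nat \<Rightarrow> nat) \<Rightarrow> nat \<Rightarrow> bool" where
  "increasing_edge xs ys \<phi> k \<longleftrightarrow> \<phi> (k mod length xs) = (\<phi> (k - 1) + 1) mod length ys"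

definition stationary_edge :: "orient list \<Rightarrow> (nat \<Rightarrow> nat) \<Rightarrow> nat \<Rightarrow> bool" where
  "stationary_edge xs \<phi> k \<longleftrightarrow> \<phi> (k mod length xs) = \<phi> (k - 1)"

definition decreasing_edge :: "orient list \<Rightarrow> orient list \<Rightarrow> (nat \<Rightarrow> nat) \<Rightarrow> nat \<Rightarrow> bool" where
  "decreasing_edge xs ys \<phi> k \<longleftrightarrow> \<phi> (k - 1) = (\<phi> (k mod length xs) + 1) mod length ys"

definition incr_edges :: "orient list \<Rightarrow> orient list \<Rightarrow> (nat \<Rightarrow> nat) \<Rightarrow> nat set" where
  "incr_edges xs ys \<phi> = {k \<in> {1..length xs}. increasing_edge xs ys \<phi> k}"

definition decr_edges :: "orient list \<Rightarrow> orient list \<Rightarrow> (nat \<Rightarrow> nat) \<Rightarrow> nat set" where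
  "decr_edges xs ys \<phi> = {k \<in> {1..length xs}. decreasing_edge xs ys \<phi> k}"

definition wind :: "orient list \<Rightarrow> orient list \<Rightarrow> (nat \<Rightarrow> nat) \<Rightarrow> real" where
  "wind xs ys \<phi> = (real (card (incr_edges xs ys \<phi>)) - real (card (decr_edges xs ys \<phi>)))
                    / real (length ys)"

definition mono_wind1 :: "orient list \<Rightarrow> orient list \<Rightarrow> (nat \<Rightarrow> nat) \<Rightarrow> bool" where
  "mono_wind1 xs ys \<phi> \<longleftrightarrow> is_hom xs ys \<phi> \<and> wind xs ys \<phi> = 1 \<and>
     (\<forall>k \<in> {1..length xs}. increasing_edge xs ys \<phi> k \<or> stationary_edge xs \<phi> k)"

text \<open>Mon_1(C,D;i); the vertex i of D is read modulo n.\<close>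
definition Mon1 :: "orient list \<Rightarrow> orient list \<Rightarrow> nat \<Rightarrow> (nat \<Rightarrow> nat) set" where
  "Mon1 xs ys i = {\<phi>. mono_wind1 xs ys \<phi> \<and> \<phi> 0 = i mod length ys}"

text \<open>alpha_phi(j+1) = alpha xs ys phi ! j (0-based list of increasing edge indices, ascending).\<close>
definition alpha :: "orient list \<Rightarrow> orient list \<Rightarrow> (nat \<Rightarrow> nat) \<Rightarrow> nat list" where
  "alpha xs ys \<phi> = sorted_list_of_set (incr_edges xs ys \<phi>)"

definition mon_ge :: "orient list \<Rightarrow> orient list \<Rightarrow> (nat \<Rightarrow> nat) \<Rightarrow> (nat \<Rightarrow> nat) \<Rightarrow> bool" where
  "mon_ge xs ys \<phi> \<phi>' \<longleftrightarrow> (\<forall>j < length ys. alpha xs ys \<phi> ! j \<le> alpha xs ys \<phi>' ! j)"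

definition is_max_Mon1 :: "orient list \<Rightarrow> orient list \<Rightarrow> nat \<Rightarrow> (nat \<Rightarrow> nat) \<Rightarrow> bool" where
  "is_max_Mon1 xs ys i \<Phi> \<longleftrightarrow> \<Phi> \<in> Mon1 xs ys i \<and> (\<forall>\<phi> \<in> Mon1 xs ys i. mon_ge xs ys \<Phi> \<phi>)"

definition mono_up_edge :: "orient list \<Rightarrow> orient list \<Rightarrow> (nat \<Rightarrow> nat) \<Rightarrow> (nat \<Rightarrow> nat) \<Rightarrow> bool" where
  "mono_up_edge xs ys \<phi> \<phi>' \<longleftrightarrow> mono_wind1 xs ys \<phi> \<and> mono_wind1 xs ys \<phi>' \<and>
     (\<exists>a l S d. a < length xs \<and> 1 \<le> l \<and> l \<le> length xs \<and>
        S = {(a + t) mod length xs | t. t < l} \<and>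
        (\<forall>t. t + 1 < l \<longrightarrow> stationary_edge xs \<phi> ((a + t) mod length xs + 1)) \<and>
        \<phi> ` S = {d} \<and>
        (\<forall>v \<in> S. \<phi>' v = (d + 1) mod length ys) \<and>
        (\<forall>v < length xs. v \<notin> S \<longrightarrow> \<phi>' v = \<phi> v))"

definition leq_star :: "orient list \<Rightarrow> orient list \<Rightarrow> bool" where
  "leq_star zs xs \<longleftrightarrow> (\<exists>\<alpha>. strict_mono_on {..<length zs} \<alpha> \<and>
     (\<forall>j < length zs. \<alpha> j < length xs \<and> (zs ! j = xs ! (\<alpha> j) \<or> zs ! j = Star)))"

definition shift :: "nat \<Rightarrow> orient list \<Rightarrow> orient list" where
  "shift i ys = drop i ys @ take i ys"

end

theory Submission
  imports Defs
begin


definition compat :: "orient \<Rightarrow> orient \<Rightarrow> bool" where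
  "compat y x \<longleftrightarrow> y = x \<or> y = Star"

lemma mod_facts:
  fixes x n :: nat
  assumes "x < n" "n \<ge> 3"
  shows "(x + 1) mod n \<noteq> x" "((x + 1) mod n + 1) mod n \<noteq> x" "x \<noteq> (x + 1) mod n"
    "x \<noteq> ((x + 1) mod n + 1) mod n"
proof -
  show a: "(x + 1) mod n \<noteq> x"
  proof (cases "x + 1 < n")
    case True thus ?thesis by auto
  next
    case False
    then have "x + 1 = n" using assms by auto
    thus ?thesis using assms by auto
  qed
  show b: "((x + 1) mod n + 1) mod n \<noteq> x"
  proof (cases "x + 2 < n")
    case True thus ?thesis using assms by auto
  next
    case False
    then have "x + 1 = n \<or> x + 2 = n" using assms by auto
    thus ?thesis using assms by auto
  qed
  show "x \<noteq> (x + 1) mod n" using a by auto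
  show "x \<noteq> ((x + 1) mod n + 1) mod n" using b by auto
qed

lemma incr_compat:
  assumes m3: "length xs \<ge> 3" and n3: "length ys \<ge> 3" and hom: "is_hom xs ys \<phi>"
    and k: "k \<in> {1..length xs}" and inc: "increasing_edge xs ys \<phi> k"
  shows "compat (ys ! \<phi> (k - 1)) (xs ! (k - 1))"
proof -
  let ?m = "length xs" and ?n = "length ys"
  define u where "u = k - 1"
  define x where "x = \<phi> u"
  have u: "u < ?m" "k mod ?m = (u + 1) mod ?m" using k by (auto simp: u_def)
  have x: "x < ?n" using hom u unfolding is_hom_def x_def by auto
  have fv: "\<phi> (k mod ?m) = (x + 1) mod ?n" using inc unfolding increasing_edge_def x_def u_def .
  have ne1: "(u + 1) mod ?m \<noteq> u" "u \<noteq> ((u + 1) mod ?m + 1) mod ?m"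
    using mod_facts[OF u(1) m3] by auto
  have P: "ys ! x \<in> {Plus, Star}" if "xs ! u \<in> {Plus, Star}"
  proof -
    have m0: "0 < ?m" using m3 by auto
    have "cyc_arc xs u (k mod ?m)" using that u m0 unfolding cyc_arc_def by auto
    then have "cyc_arc ys (\<phi> u) (\<phi> (k mod ?m))" using hom unfolding is_hom_def by blast
    then show ?thesis using mod_facts[OF x n3] unfolding cyc_arc_def fv x_def[symmetric] by auto
  qed
  have M: "ys ! x \<in> {Minus, Star}" if "xs ! u \<in> {Minus, Star}"
  proof -
    have m0: "0 < ?m" using m3 by auto
    have "cyc_arc xs (k mod ?m) u" using that u ne1 m0 unfolding cyc_arc_def by auto
    then have "cyc_arc ys (\<phi> (k mod ?m)) (\<phi> u)" using hom unfolding is_hom_def by blast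
    then show ?thesis using mod_facts[OF x n3] unfolding cyc_arc_def fv x_def[symmetric] by auto
  qed
  show ?thesis unfolding compat_def x_def[symmetric] u_def[symmetric]
    using P M by (cases "xs ! u"; cases "ys ! x") auto
qed


definition incpos :: "orient list \<Rightarrow> orient list \<Rightarrow> (nat \<Rightarrow> nat) \<Rightarrow> nat set" where
  "incpos xs ys \<phi> = {b. b < length xs \<and> increasing_edge xs ys \<phi> (Suc b)}"

lemma incr_edges_incpos: "incr_edges xs ys \<phi> = Suc ` incpos xs ys \<phi>"
proof
  show "incr_edges xs ys \<phi> \<subseteq> Suc ` incpos xs ys \<phi>"
  proof
    fix k assume "k \<in> incr_edges xs ys \<phi>"
    then have k: "1 \<le> k" "k \<le> length xs" "increasing_edge xs ys \<phi> k" unfolding incr_edges_def by auto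
    then have "k - 1 \<in> incpos xs ys \<phi>" unfolding incpos_def by simp
    moreover have "k = Suc (k - 1)" using k by simp
    ultimately show "k \<in> Suc ` incpos xs ys \<phi>" by blast
  qed
  show "Suc ` incpos xs ys \<phi> \<subseteq> incr_edges xs ys \<phi>"
    unfolding incr_edges_def incpos_def by auto
qed


lemma mono_card:
  assumes m3: "length xs \<ge> 3" and n3: "length ys \<ge> 3" and mw: "mono_wind1 xs ys \<phi>"
  shows "card (incpos xs ys \<phi>) = length ys"
proof -
  let ?m = "length xs" and ?n = "length ys"
  have hom: "is_hom xs ys \<phi>" using mw unfolding mono_wind1_def by auto
  have "decr_edges xs ys \<phi> = {}"
  proof -
    have "\<not> decreasing_edge xs ys \<phi> k" if k: "k \<in> {1..?m}" for k
    proof -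
      have "k - 1 < ?m" using k by auto
      then have x: "\<phi> (k - 1) < ?n" using hom unfolding is_hom_def by blast
      have "increasing_edge xs ys \<phi> k \<or> stationary_edge xs \<phi> k" using mw k unfolding mono_wind1_def by blast
      then show ?thesis
      proof
        assume "increasing_edge xs ys \<phi> k"
        then have "\<phi> (k mod ?m) = (\<phi> (k - 1) + 1) mod ?n" unfolding increasing_edge_def .
        then show ?thesis unfolding decreasing_edge_def using mod_facts(4)[OF x n3] by simp
      next
        assume "stationary_edge xs \<phi> k"
        then have "\<phi> (k mod ?m) = \<phi> (k - 1)" unfolding stationary_edge_def .
        then show ?thesis unfolding decreasing_edge_def using mod_facts(3)[OF x n3] by simp
      qed
    qed
    then show ?thesis unfolding decr_edges_def by blast
  qed
  then have "wind xs ys \<phi> = real (card (incr_edges xs ys \<phi>)) / real ?n" unfolding wind_def by simp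
  moreover have "wind xs ys \<phi> = 1" using mw unfolding mono_wind1_def by blast
  moreover have "real ?n \<noteq> 0" using n3 by (cases ys) auto
  ultimately have "real (card (incr_edges xs ys \<phi>)) = real ?n" by (simp add: divide_eq_1_iff)
  then have "card (incr_edges xs ys \<phi>) = ?n" by (simp only: of_nat_eq_iff)
  moreover have "card (incr_edges xs ys \<phi>) = card (incpos xs ys \<phi>)"
    unfolding incr_edges_incpos by (rule card_image) simp
  ultimately show ?thesis by simp
qed

lemma mono_count:
  assumes m3: "length xs \<ge> 3" and n3: "length ys \<ge> 3" and mw: "mono_wind1 xs ys \<phi>"
  shows "v < length xs \<Longrightarrow> \<phi> v = (\<phi> 0 + card {b \<in> incpos xs ys \<phi>. b < v}) mod length ys"
proof (induction v)
  case 0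
  have "0 < length xs" using m3 by linarith
  then have "\<phi> 0 < length ys" using mw unfolding mono_wind1_def is_hom_def by blast
  then show ?case by simp
next
  case (Suc v)
  let ?m = "length xs" and ?n = "length ys"
  have IH: "\<phi> v = (\<phi> 0 + card {b \<in> incpos xs ys \<phi>. b < v}) mod ?n" using Suc by auto
  have k: "Suc v \<in> {1..?m}" using Suc by auto
  have md: "Suc v mod ?m = Suc v" using Suc by auto
  have fin: "finite {b \<in> incpos xs ys \<phi>. b < v}" by auto
  have "increasing_edge xs ys \<phi> (Suc v) \<or> stationary_edge xs \<phi> (Suc v)"
    using mw k unfolding mono_wind1_def by auto
  then show ?case
  proof
    assume inc: "increasing_edge xs ys \<phi> (Suc v)"
    then have "v \<in> incpos xs ys \<phi>" using Suc unfolding incpos_def by auto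
    then have "{b \<in> incpos xs ys \<phi>. b < Suc v} = insert v {b \<in> incpos xs ys \<phi>. b < v}" by auto
    then have c: "card {b \<in> incpos xs ys \<phi>. b < Suc v} = Suc (card {b \<in> incpos xs ys \<phi>. b < v})"
      using fin by simp
    have "\<phi> (Suc v) = (\<phi> v + 1) mod ?n" using inc md unfolding increasing_edge_def by simp
    also have "\<dots> = (\<phi> 0 + card {b \<in> incpos xs ys \<phi>. b < v} + 1) mod ?n"
      unfolding IH by (simp add: mod_Suc_eq)
    finally show ?thesis unfolding c by simp
  next
    assume st: "stationary_edge xs \<phi> (Suc v)"
    have "\<phi> (Suc v) = \<phi> v" using st md unfolding stationary_edge_def by simp
    moreover have "v \<notin> incpos xs ys \<phi>"
    proof
      assume "v \<in> incpos xs ys \<phi>"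
      then have "\<phi> (Suc v) = (\<phi> v + 1) mod ?n" using md unfolding incpos_def increasing_edge_def by simp
      moreover have "0 < ?n" using n3 by linarith
      then have "\<phi> v < ?n" using IH by simp
      ultimately show False using mod_facts[of "\<phi> v" ?n] n3 \<open>\<phi> (Suc v) = \<phi> v\<close> by auto
    qed
    ultimately have "{b \<in> incpos xs ys \<phi>. b < Suc v} = {b \<in> incpos xs ys \<phi>. b < v}"
      using less_Suc_eq by blast
    then show ?thesis using IH \<open>\<phi> (Suc v) = \<phi> v\<close> by (simp only:)
  qed
qed



definition constr :: "orient list \<Rightarrow> nat \<Rightarrow> nat set \<Rightarrow> nat \<Rightarrow> nat" where
  "constr ys i B = (\<lambda>v. (i + card {c \<in> B. c < v}) mod length ys)"

lemma constr_step:
  assumes m3: "length xs \<ge> 3" and n3: "length ys \<ge> 3" and B: "B \<subseteq> {..<length xs}"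
    and cB: "card B = length ys" and k: "k \<in> {1..length xs}"
  shows "constr ys i B (k mod length xs) =
     (if k - 1 \<in> B then (constr ys i B (k - 1) + 1) mod length ys else constr ys i B (k - 1))"
proof -
  let ?m = "length xs" and ?n = "length ys"
  define u where "u = k - 1"
  have finB: "finite B" using B finite_subset by blast
  have fin: "finite {c \<in> B. c < u}" using finB by auto
  show ?thesis
  proof (cases "k < ?m")
    case True
    then have md: "k mod ?m = k" "k = Suc u" using k by (auto simp: u_def)
    show ?thesis
    proof (cases "u \<in> B")
      case True
      then have "{c \<in> B. c < k} = insert u {c \<in> B. c < u}" using md by auto
      then have "card {c \<in> B. c < k} = Suc (card {c \<in> B. c < u})" using fin by simp
      then show ?thesis using True unfolding constr_def md(1) u_def[symmetric]
        by (simp add: mod_Suc_eq)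
    next
      case False
      then have "{c \<in> B. c < k} = {c \<in> B. c < u}" using md less_Suc_eq by auto
      then show ?thesis using False unfolding constr_def md(1) u_def[symmetric] by simp
    qed
  next
    case False
    then have md: "k mod ?m = 0" "k = ?m" "u = ?m - 1" using k by (auto simp: u_def)
    have c0: "constr ys i B 0 = i mod ?n" unfolding constr_def by simp
    show ?thesis
    proof (cases "u \<in> B")
      case True
      then have "B = insert u {c \<in> B. c < u}" using B md by auto
      then have "card B = Suc (card {c \<in> B. c < u})" using fin
        by (metis (no_types, lifting) card_insert_disjoint less_irrefl mem_Collect_eq)
      then have "card {c \<in> B. c < u} + 1 = ?n" using cB by simp
      then have "(constr ys i B u + 1) mod ?n = i mod ?n" unfolding constr_def
        by (metis add.assoc mod_add_left_eq mod_add_self2)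
      then show ?thesis using True c0 unfolding md(1) u_def[symmetric] by simp
    next
      case False
      have "x < u" if "x \<in> B" for x
      proof -
        have "x < ?m" "x \<noteq> u" using that B False by auto
        then show ?thesis using md(3) by linarith
      qed
      then have "B = {c \<in> B. c < u}" by auto
      then have "card {c \<in> B. c < u} = ?n" using cB by simp
      then have "constr ys i B u = i mod ?n" unfolding constr_def by simp
      then show ?thesis using False c0 unfolding md(1) u_def[symmetric] by simp
    qed
  qed
qed

lemma constr_mono:
  assumes m3: "length xs \<ge> 3" and n3: "length ys \<ge> 3" and B: "B \<subseteq> {..<length xs}"
    and cB: "card B = length ys"
    and cp: "\<forall>b \<in> B. compat (ys ! ((i + card {c \<in> B. c < b}) mod length ys)) (xs ! b)"
  shows "mono_wind1 xs ys (constr ys i B)" "constr ys i B 0 = i mod length ys"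
    "incpos xs ys (constr ys i B) = B"
proof -
  let ?m = "length xs" and ?n = "length ys" and ?f = "constr ys i B"
  have n0: "0 < ?n" using n3 by linarith
  have m0: "0 < ?m" using m3 by linarith
  have lt: "?f v < ?n" for v unfolding constr_def using n0 by simp
  have st: "?f (k mod ?m) = (if k - 1 \<in> B then (?f (k - 1) + 1) mod ?n else ?f (k - 1))"
    if "k \<in> {1..?m}" for k using constr_step[OF m3 n3 B cB that] .
  have inc_iff: "increasing_edge xs ys ?f k \<longleftrightarrow> k - 1 \<in> B" if "k \<in> {1..?m}" for k
    using st[OF that] mod_facts[OF lt n3] unfolding increasing_edge_def by auto
  have notdec: "\<not> decreasing_edge xs ys ?f k" if "k \<in> {1..?m}" for k
    using st[OF that] mod_facts[OF lt n3] unfolding decreasing_edge_def by (auto split: if_splits)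
  have incst: "increasing_edge xs ys ?f k \<or> stationary_edge xs ?f k" if "k \<in> {1..?m}" for k
    using st[OF that] unfolding increasing_edge_def stationary_edge_def by (auto split: if_splits)
  show ip: "incpos xs ys ?f = B"
  proof -
    have "b \<in> incpos xs ys ?f \<longleftrightarrow> b \<in> B" for b
    proof (cases "b < ?m")
      case True
      then have "Suc b \<in> {1..?m}" by auto
      then show ?thesis using inc_iff[of "Suc b"] True unfolding incpos_def by auto
    next
      case False then show ?thesis using B unfolding incpos_def by auto
    qed
    then show ?thesis by blast
  qed
  have hom: "is_hom xs ys ?f"
    unfolding is_hom_def
  proof (intro conjI allI impI)
    fix u assume "u < ?m" then show "?f u < ?n" using lt by simp
  next
    fix u v assume a: "cyc_arc xs u v"
    then have uv: "u < ?m" "v < ?m" unfolding cyc_arc_def by auto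
    have cpu: "compat (ys ! ?f u) (xs ! u)" if "u \<in> B" for u
      using cp that unfolding constr_def by auto
    from a consider "u = v" | "v = (u + 1) mod ?m" "xs ! u \<in> {Plus, Star}"
      | "u = (v + 1) mod ?m" "xs ! v \<in> {Minus, Star}" unfolding cyc_arc_def by auto
    then show "cyc_arc ys (?f u) (?f v)"
    proof cases
      case 1 then show ?thesis unfolding cyc_arc_def using lt by auto
    next
      case 2
      have "Suc u \<in> {1..?m}" using uv by auto
      from st[OF this] have e: "?f v = (if u \<in> B then (?f u + 1) mod ?n else ?f u)"
        using 2 by simp
      show ?thesis
      proof (cases "u \<in> B")
        case True
        then have "ys ! ?f u \<in> {Plus, Star}" using cpu[OF True] 2 unfolding compat_def by auto
        then show ?thesis using e True lt n0 unfolding cyc_arc_def by auto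
      next
        case False then show ?thesis using e lt unfolding cyc_arc_def by auto
      qed
    next
      case 3
      have "Suc v \<in> {1..?m}" using uv by auto
      from st[OF this] have e: "?f u = (if v \<in> B then (?f v + 1) mod ?n else ?f v)"
        using 3 by simp
      show ?thesis
      proof (cases "v \<in> B")
        case True
        then have "ys ! ?f v \<in> {Minus, Star}" using cpu[OF True] 3 unfolding compat_def by auto
        then show ?thesis using e True lt n0 unfolding cyc_arc_def by auto
      next
        case False then show ?thesis using e lt unfolding cyc_arc_def by auto
      qed
    qed
  qed
  have "decr_edges xs ys ?f = {}" unfolding decr_edges_def using notdec by auto
  moreover have "card (incr_edges xs ys ?f) = ?n"
    unfolding incr_edges_incpos ip using cB by (simp add: card_image)
  ultimately have "wind xs ys ?f = 1" unfolding wind_def using n0 by simp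
  then show "mono_wind1 xs ys ?f" unfolding mono_wind1_def using hom incst by auto
  show "?f 0 = i mod ?n" unfolding constr_def by simp
qed



lemma shift_nth:
  assumes "i \<le> length ys" "j < length ys"
  shows "shift i ys ! j = ys ! ((i + j) mod length ys)"
proof (cases "j < length ys - i")
  case True
  then have "(i + j) mod length ys = i + j" using assms by simp
  then show ?thesis using True assms unfolding shift_def by (simp add: nth_append)
next
  case False
  then have "(i + j) mod length ys = (i + j - length ys) mod length ys" using assms
    by (simp add: le_mod_geq)
  also have "\<dots> = j - (length ys - i)" using assms False by simp
  finally have "(i + j) mod length ys = j - (length ys - i)" .
  then show ?thesis using False assms unfolding shift_def by (simp add: nth_append min_def)
qed

lemma zs_nth:
  assumes "i \<le> length ys" "j \<le> length ys" "0 < length ys"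
  shows "(shift i ys @ [ys ! (i mod length ys)]) ! j = ys ! ((i + j) mod length ys)"
proof (cases "j < length ys")
  case True
  have "length (shift i ys) = length ys" by (simp add: shift_def)
  then show ?thesis using shift_nth[OF assms(1) True] True by (simp add: nth_append)
next
  case False
  then have j: "j = length ys" using assms by simp
  have "length (shift i ys) = length ys" by (simp add: shift_def)
  then show ?thesis using j by (simp add: nth_append)
qed

lemma zs_len: "length (shift i ys @ [y]) = length ys + 1"
  unfolding shift_def by simp

lemma rank_sorted:
  assumes fin: "finite P" and j: "j < card P"
  shows "card {c \<in> P. c < sorted_list_of_set P ! j} = (j::nat)"
proof -
  define L where "L = sorted_list_of_set P"
  have sL: "set L = P" "sorted_wrt (<) L" "length L = card P" "distinct L"
    using fin unfolding L_def by (auto simp: strict_sorted_list_of_set)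
  have "{c \<in> P. c < L ! j} = (\<lambda>k. L ! k) ` {..<j}"
  proof
    show "{c \<in> P. c < L ! j} \<subseteq> (!) L ` {..<j}"
    proof
      fix c assume c: "c \<in> {c \<in> P. c < L ! j}"
      then obtain k where k: "k < length L" "c = L ! k" using sL by (auto simp: in_set_conv_nth)
      have "k < j"
      proof (rule ccontr)
        assume "\<not> k < j"
        then have "L ! j \<le> L ! k" using sL(2) k j sL(3)
          by (metis le_less linorder_not_less sorted_wrt_nth_less)
        then show False using c k by auto
      qed
      then show "c \<in> (!) L ` {..<j}" using k by auto
    qed
    show "(!) L ` {..<j} \<subseteq> {c \<in> P. c < L ! j}"
      using sL j by (auto intro: sorted_wrt_nth_less simp: )
  qed
  moreover have "inj_on (\<lambda>k. L ! k) {..<j}" using sL j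
    by (auto simp: inj_on_def nth_eq_iff_index_eq)
  ultimately show ?thesis unfolding L_def[symmetric] by (simp add: card_image)
qed

lemma sorted_last_ge:
  assumes fin: "finite P" and c: "card P = n" and n: "0 < n" and b: "b \<in> P"
  shows "b \<le> sorted_list_of_set P ! (n - 1)"
proof -
  define L where "L = sorted_list_of_set P"
  have sL: "set L = P" "sorted L" "length L = n"
    using fin c unfolding L_def by auto
  obtain k where k: "k < n" "b = L ! k" using b sL by (auto simp: in_set_conv_nth)
  show ?thesis unfolding L_def[symmetric] k(2) using sL k n by (intro sorted_nth_mono) auto
qed

lemma sorted_nth_in:
  assumes fin: "finite P" and c: "card P = n" and j: "j < n"
  shows "sorted_list_of_set P ! j \<in> P"
  using assms by (metis length_sorted_list_of_set nth_mem set_sorted_list_of_set)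

lemma mod_suc_inj:
  fixes x y n :: nat
  assumes "x < n" "y < n" "(x + 1) mod n = (y + 1) mod n"
  shows "x = y"
proof -
  have "x + 1 \<le> n" "y + 1 \<le> n" using assms by auto
  then show ?thesis using assms(3)
    by (cases "x + 1 = n"; cases "y + 1 = n") auto
qed

lemma mod_add_self_cases:
  fixes x c n :: nat
  assumes "x < n" "c \<le> n" "(x + c) mod n = x"
  shows "c = 0 \<or> c = n"
proof (rule ccontr)
  assume "\<not> (c = 0 \<or> c = n)"
  then have c: "0 < c" "c < n" using assms by auto
  show False
  proof (cases "x + c < n")
    case True then show ?thesis using assms c by simp
  next
    case False
    have "x + c - n < n" using assms c by simp
    then have "(x + c) mod n = x + c - n" using False by (simp add: le_mod_geq)
    then have "x + c - n = x" using assms(3) by simp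
    then show ?thesis using assms c False by linarith
  qed
qed

lemma S_shape:
  fixes a l m :: nat
  assumes a: "a < m" and l: "1 \<le> l" "l \<le> m" and z: "0 \<in> {(a + t) mod m | t. t < l}"
  shows "(a = 0 \<and> {(a + t) mod m | t. t < l} = {..<l}) \<or>
         (0 < a \<and> m < a + l \<and> {(a + t) mod m | t. t < l} = {a..<m} \<union> {..<a + l - m})"
proof (cases "a = 0")
  case True
  have "{(a + t) mod m | t. t < l} = {..<l}"
  proof
    show "{(a + t) mod m | t. t < l} \<subseteq> {..<l}" using True l by auto
    show "{..<l} \<subseteq> {(a + t) mod m | t. t < l}"
    proof
      fix v assume "v \<in> {..<l}"
      then have "v = (a + v) mod m \<and> v < l" using True l by auto
      then show "v \<in> {(a + t) mod m | t. t < l}" by blast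
    qed
  qed
  then show ?thesis using True by simp
next
  case False
  obtain t0 where t0: "t0 < l" "(a + t0) mod m = 0" using z by auto
  have lt2: "a + t0 - m < m" using a t0 l by auto
  have ge: "m \<le> a + t0"
  proof (rule ccontr)
    assume "\<not> m \<le> a + t0"
    then have "(a + t0) mod m = a + t0" by simp
    then show False using t0 False by simp
  qed
  then have "(a + t0) mod m = a + t0 - m" using lt2 by (simp add: le_mod_geq)
  then have "a + t0 = m" using t0 ge by simp
  then have ml: "m < a + l" using t0 by simp
  have "{(a + t) mod m | t. t < l} = {a..<m} \<union> {..<a + l - m}"
  proof
    show "{(a + t) mod m | t. t < l} \<subseteq> {a..<m} \<union> {..<a + l - m}"
    proof
      fix v assume "v \<in> {(a + t) mod m | t. t < l}"
      then obtain t where t: "t < l" "v = (a + t) mod m" by auto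
      show "v \<in> {a..<m} \<union> {..<a + l - m}"
      proof (cases "a + t < m")
        case True then show ?thesis using t by auto
      next
        case False
        then have "v = a + t - m" using t a l by (simp add: mod_if)
        then show ?thesis using t a l by auto
      qed
    qed
    show "{a..<m} \<union> {..<a + l - m} \<subseteq> {(a + t) mod m | t. t < l}"
    proof
      fix v assume v: "v \<in> {a..<m} \<union> {..<a + l - m}"
      show "v \<in> {(a + t) mod m | t. t < l}"
      proof (cases "v \<in> {a..<m}")
        case True
        then have "v = (a + (v - a)) mod m \<and> v - a < l" using ml by auto
        then show ?thesis by blast
      next
        case False
        then have vl: "v < a + l - m" using v by auto
        then have "v = (a + (v + m - a)) mod m \<and> v + m - a < l" using a ml l by auto
        then show ?thesis by blast
      qed
    qed
  qed
  then show ?thesis using False ml by simp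
qed



theorem fact3p6:
  fixes xs ys :: "orient list" and i :: nat and \<Phi> :: "nat \<Rightarrow> nat"
  assumes "length xs \<ge> 3" and "length ys \<ge> 3"
    and "non_contractible ys"
    and "i \<in> {1..length ys}"
    and "Mon1 xs ys i \<noteq> {}"
    and "is_max_Mon1 xs ys i \<Phi>"
  shows "(\<exists>\<phi>' \<in> Mon1 xs ys (i + 1). mono_up_edge xs ys \<Phi> \<phi>') \<longleftrightarrow>
         leq_star (shift i ys @ [ys ! (i mod length ys)]) xs"
proof -
  let ?m = "length xs" and ?n = "length ys"
  define zs where "zs = shift i ys @ [ys ! (i mod length ys)]"
  have m3: "?m \<ge> 3" and n3: "?n \<ge> 3" using assms by auto
  have n0: "0 < ?n" and m0: "0 < ?m" using m3 n3 by linarith+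
  have iin: "i \<le> ?n" using assms by auto
  have zl: "length zs = ?n + 1" unfolding zs_def by (simp add: shift_def)
  have znth: "zs ! j = ys ! ((i + j) mod ?n)" if "j \<le> ?n" for j
    unfolding zs_def using zs_nth[OF iin that n0] .
  have PhiM: "\<Phi> \<in> Mon1 xs ys i" and PhiMax: "\<forall>\<phi> \<in> Mon1 xs ys i. mon_ge xs ys \<Phi> \<phi>"
    using assms(6) unfolding is_max_Mon1_def by auto
  have mwP: "mono_wind1 xs ys \<Phi>" and P0: "\<Phi> 0 = i mod ?n" using PhiM unfolding Mon1_def by auto
  have homP: "is_hom xs ys \<Phi>" using mwP unfolding mono_wind1_def by auto
  define P where "P = incpos xs ys \<Phi>"
  have cP: "card P = ?n" unfolding P_def using mono_card[OF m3 n3 mwP] .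
  have Psub: "P \<subseteq> {..<?m}" unfolding P_def incpos_def by auto
  have finP: "finite P" using Psub finite_subset by blast
  have Pne: "P \<noteq> {}" using cP n0 by auto
  have Pf: "\<Phi> v = (i mod ?n + card {b \<in> P. b < v}) mod ?n" if "v < ?m" for v
    using mono_count[OF m3 n3 mwP that] unfolding P_def P0 .
  have Pcomp: "compat (ys ! \<Phi> b) (xs ! b)" if "b \<in> P" for b
  proof -
    have "Suc b \<in> {1..?m}" "increasing_edge xs ys \<Phi> (Suc b)" using that unfolding P_def incpos_def by auto
    from incr_compat[OF m3 n3 homP this] show ?thesis by simp
  qed
  show ?thesis unfolding zs_def[symmetric]
  proof
    show "leq_star zs xs" if ex: "\<exists>\<phi>'\<in>Mon1 xs ys (i + 1). mono_up_edge xs ys \<Phi> \<phi>'"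
    proof -
      obtain \<phi>' where phi'M: "\<phi>' \<in> Mon1 xs ys (i + 1)" and up: "mono_up_edge xs ys \<Phi> \<phi>'"
        using ex by blast
      have mw': "mono_wind1 xs ys \<phi>'" and p'0: "\<phi>' 0 = (i + 1) mod ?n" using phi'M unfolding Mon1_def by auto
      have hom': "is_hom xs ys \<phi>'" using mw' unfolding mono_wind1_def by auto
      have "\<exists>a l S d. a < ?m \<and> 1 \<le> l \<and> l \<le> ?m \<and>
        S = {(a + t) mod ?m | t. t < l} \<and>
        (\<forall>t. t + 1 < l \<longrightarrow> stationary_edge xs \<Phi> ((a + t) mod ?m + 1)) \<and>
        \<Phi> ` S = {d} \<and> (\<forall>v \<in> S. \<phi>' v = (d + 1) mod ?n) \<and>
        (\<forall>v < ?m. v \<notin> S \<longrightarrow> \<phi>' v = \<Phi> v)"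
        using up unfolding mono_up_edge_def by (rule conjunct2[OF conjunct2])
      then obtain a l S d where props: "a < ?m \<and> 1 \<le> l \<and> l \<le> ?m \<and>
        S = {(a + t) mod ?m | t. t < l} \<and>
        (\<forall>t. t + 1 < l \<longrightarrow> stationary_edge xs \<Phi> ((a + t) mod ?m + 1)) \<and>
        \<Phi> ` S = {d} \<and> (\<forall>v \<in> S. \<phi>' v = (d + 1) mod ?n) \<and>
        (\<forall>v < ?m. v \<notin> S \<longrightarrow> \<phi>' v = \<Phi> v)"
        by (elim exE) (rule that)
      note am = props[THEN conjunct1]
      note l = props[THEN conjunct2, THEN conjunct1] props[THEN conjunct2, THEN conjunct2, THEN conjunct1]
      note S_def = props[THEN conjunct2, THEN conjunct2, THEN conjunct2, THEN conjunct1]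
      note imS = props[THEN conjunct2, THEN conjunct2, THEN conjunct2, THEN conjunct2, THEN conjunct2, THEN conjunct1]
      note phi'S = props[THEN conjunct2, THEN conjunct2, THEN conjunct2, THEN conjunct2, THEN conjunct2, THEN conjunct2, THEN conjunct1]
      note offS = props[THEN conjunct2, THEN conjunct2, THEN conjunct2, THEN conjunct2, THEN conjunct2, THEN conjunct2, THEN conjunct2]
      have PhiS: "\<Phi> v = d" if "v \<in> S" for v using imS that by blast
      have ltP: "\<Phi> v < ?n" if "v < ?m" for v using homP that unfolding is_hom_def by auto
      have lt': "\<phi>' v < ?n" if "v < ?m" for v using hom' that unfolding is_hom_def by auto
      have i1: "(i + 1) mod ?n = (i mod ?n + 1) mod ?n" by (simp add: mod_Suc_eq)
      have imod: "i mod ?n < ?n" using n0 by simp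
      have zS: "0 \<in> S"
      proof (rule ccontr)
        assume "0 \<notin> S"
        then have "\<phi>' 0 = \<Phi> 0" using offS m0 by auto
        then show False using p'0 P0 i1 mod_facts[OF imod n3] by simp
      qed
      have dd: "d = i mod ?n" using PhiS[OF zS] P0 by simp
      have dn: "d < ?n" using dd n0 by simp
      have Sshape: "(a = 0 \<and> S = {..<l}) \<or> (0 < a \<and> ?m < a + l \<and> S = {a..<?m} \<union> {..<a + l - ?m})"
        using S_shape[OF am l zS[unfolded S_def]] unfolding S_def .
      have lm: "l < ?m"
      proof (rule ccontr)
        assume "\<not> l < ?m"
        then have "l = ?m" using l by simp
        then have allS: "v \<in> S" if "v < ?m" for v using Sshape that by auto
        have "incpos xs ys \<phi>' = {}"
        proof -
          have "\<not> increasing_edge xs ys \<phi>' (Suc b)" if "b < ?m" for b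
          proof -
            have "Suc b mod ?m < ?m" using m0 by simp
            then have "\<phi>' (Suc b mod ?m) = (d + 1) mod ?n" "\<phi>' b = (d + 1) mod ?n"
              using allS phi'S that by auto
            moreover have "(d + 1) mod ?n < ?n" using n0 by simp
            ultimately show ?thesis unfolding increasing_edge_def using mod_facts[of "(d + 1) mod ?n" ?n] n3
              by auto
          qed
          then show ?thesis unfolding incpos_def by auto
        qed
        then show False using mono_card[OF m3 n3 mw'] n0 by simp
      qed
      define w where "w = (if a = 0 then ?m - 1 else a - 1)"
      define z where "z = (if a = 0 then l else a + l - ?m)"
      have wS: "w \<notin> S" "w < ?m" using Sshape lm am unfolding w_def by auto
      have zS': "z \<notin> S" "z < ?m" "z \<le> w" "1 \<le> z" "z - 1 \<in> S"
        using Sshape lm am l unfolding z_def w_def by auto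
      have aS: "a \<in> S" using Sshape am l by auto
      have wa: "Suc w mod ?m = a" "Suc w - 1 = w" "Suc w \<in> {1..?m}" using wS am unfolding w_def by auto
      have Pa: "\<Phi> a = d" using PhiS[OF aS] .
      have p'a: "\<phi>' a = (d + 1) mod ?n" using phi'S aS by auto
      have p'w: "\<phi>' w = \<Phi> w" using offS wS by auto
      have Pw: "\<Phi> w = d" and incw: "increasing_edge xs ys \<phi>' (Suc w)"
      proof -
        have "increasing_edge xs ys \<phi>' (Suc w) \<or> stationary_edge xs \<phi>' (Suc w)"
          using mw' wa unfolding mono_wind1_def by blast
        moreover have "increasing_edge xs ys \<Phi> (Suc w) \<or> stationary_edge xs \<Phi> (Suc w)"
          using mwP wa unfolding mono_wind1_def by blast
        moreover have "(d + 1) mod ?n < ?n" using n0 by simp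
        ultimately have "increasing_edge xs ys \<phi>' (Suc w)"
          unfolding increasing_edge_def stationary_edge_def wa(1,2) p'a p'w Pa
          using mod_facts[OF dn n3] by auto
        then show "increasing_edge xs ys \<phi>' (Suc w)" .
        then have "(d + 1) mod ?n = (\<Phi> w + 1) mod ?n"
          unfolding increasing_edge_def wa(1,2) p'a p'w .
        then show "\<Phi> w = d" using mod_suc_inj[OF ltP[OF wS(2)] dn] by simp
      qed
      have compw: "compat (ys ! d) (xs ! w)"
        using incr_compat[OF m3 n3 hom' wa(3) incw] unfolding wa(2) p'w Pw .
      have Pw_lt: "b < w" if "b \<in> P" for b
      proof -
        have "(i mod ?n + card {b \<in> P. b < w}) mod ?n = i mod ?n" using Pf[OF wS(2)] Pw dd by simp
        moreover have "card {b \<in> P. b < w} \<le> ?n" using card_mono[OF finP, of "{b \<in> P. b < w}"] cP by auto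
        ultimately have "card {b \<in> P. b < w} = 0 \<or> card {b \<in> P. b < w} = ?n"
          using mod_add_self_cases[OF imod] by blast
        then show ?thesis
        proof
          assume c0: "card {b \<in> P. b < w} = 0"
          have z1: "Suc (z - 1) = z" using zS' by simp
          have zk: "Suc (z - 1) \<in> {1..?m}" "Suc (z - 1) mod ?m = z" "Suc (z - 1) - 1 = z - 1"
            using zS' z1 by auto
          have Pz1: "\<Phi> (z - 1) = d" using PhiS zS' by auto
          have p'z1: "\<phi>' (z - 1) = (d + 1) mod ?n" using phi'S zS' by auto
          have p'z: "\<phi>' z = \<Phi> z" using offS zS' by auto
          have "increasing_edge xs ys \<phi>' (Suc (z - 1)) \<or> stationary_edge xs \<phi>' (Suc (z - 1))"
            using mw' zk unfolding mono_wind1_def by blast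
          moreover have "increasing_edge xs ys \<Phi> (Suc (z - 1)) \<or> stationary_edge xs \<Phi> (Suc (z - 1))"
            using mwP zk unfolding mono_wind1_def by blast
          moreover have "(d + 1) mod ?n < ?n" using n0 by simp
          ultimately have A1: "\<Phi> z = ((d + 1) mod ?n + 1) mod ?n \<or> \<Phi> z = (d + 1) mod ?n"
            and A2: "\<Phi> z = (d + 1) mod ?n \<or> \<Phi> z = d"
            unfolding increasing_edge_def stationary_edge_def zk(2,3) p'z1 p'z Pz1 by blast+
          have Pz: "\<Phi> z = (d + 1) mod ?n"
          proof (rule ccontr)
            assume nz: "\<Phi> z \<noteq> (d + 1) mod ?n"
            then have "\<Phi> z = d" using A2 by blast
            moreover have "\<Phi> z = ((d + 1) mod ?n + 1) mod ?n" using A1 nz by blast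
            ultimately show False using mod_facts(2)[OF dn n3] by simp
          qed
          have "{b \<in> P. b < z} \<subseteq> {b \<in> P. b < w}" using zS' by auto
          moreover have "{b \<in> P. b < w} = {}" using c0 finP by simp
          ultimately have ez: "{b \<in> P. b < z} = {}" by blast
          have "\<Phi> z = d" using Pf[OF zS'(2)] dd unfolding ez by simp
          then show ?thesis using Pz mod_facts[OF dn n3] by simp
        next
          assume cn: "card {b \<in> P. b < w} = ?n"
          have "{b \<in> P. b < w} = P" using card_subset_eq[OF finP _ cn[folded cP]] by auto
          then show ?thesis using that by auto
        qed
      qed
      define L where "L = sorted_list_of_set P"
      have sL: "set L = P" "sorted_wrt (<) L" "length L = ?n"
        using finP cP unfolding L_def by (auto simp: strict_sorted_list_of_set)
      define \<beta> where "\<beta> = (\<lambda>j. if j < ?n then L ! j else w)"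
      have LP: "L ! j \<in> P" if "j < ?n" for j using sL that by auto
      show ?thesis unfolding leq_star_def zl
      proof (intro exI conjI allI impI)
        show "strict_mono_on {..<?n + 1} \<beta>"
        proof (rule strict_mono_onI)
          fix r s assume rs: "r \<in> {..<?n + 1}" "s \<in> {..<?n + 1}" "r < s"
          show "\<beta> r < \<beta> s"
          proof (cases "s < ?n")
            case True then show ?thesis using rs sL unfolding \<beta>_def by (auto intro: sorted_wrt_nth_less)
          next
            case False
            then have "r < ?n" using rs by auto
            then show ?thesis using False Pw_lt[OF LP] unfolding \<beta>_def by auto
          qed
        qed
      next
        fix j assume j: "j < ?n + 1"
        show "\<beta> j < ?m"
          using j LP Psub wS unfolding \<beta>_def by (auto split: if_splits) 
        show "zs ! j = xs ! \<beta> j \<or> zs ! j = Star"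
        proof (cases "j < ?n")
          case True
          have r: "card {b \<in> P. b < L ! j} = j" unfolding L_def using rank_sorted[OF finP] True cP by simp
          have "\<Phi> (L ! j) = (i + j) mod ?n" using Pf[of "L ! j"] LP[OF True] Psub r
            by (auto simp: mod_add_left_eq)
          then have "compat (ys ! ((i + j) mod ?n)) (xs ! \<beta> j)" using Pcomp[OF LP[OF True]] True
            unfolding \<beta>_def by simp
          then show ?thesis using znth[of j] True unfolding compat_def by simp
        next
          case False
          then have "j = ?n" using j by simp
          then show ?thesis using znth[of j] compw dd unfolding compat_def \<beta>_def by simp
        qed
      qed
    qed
  next
    show "\<exists>\<phi>'\<in>Mon1 xs ys (i + 1). mono_up_edge xs ys \<Phi> \<phi>'" if ls: "leq_star zs xs"
    proof -
      obtain \<beta> where smb: "strict_mono_on {..<?n + 1} \<beta>"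
        and bj: "\<And>j. j < ?n + 1 \<Longrightarrow> \<beta> j < ?m \<and> (zs ! j = xs ! (\<beta> j) \<or> zs ! j = Star)"
        using ls unfolding leq_star_def zl by blast
      have bmono: "\<beta> j < \<beta> j'" if "j < j'" "j' \<le> ?n" for j j'
        using smb that by (auto intro: strict_mono_onD)
      have bcomp: "compat (ys ! ((i + j) mod ?n)) (xs ! \<beta> j)" if "j \<le> ?n" for j
        using bj[of j] znth[OF that] that unfolding compat_def by auto
      define B where "B = \<beta> ` {..<?n}"
      have injb: "inj_on \<beta> {..<?n}"
      proof (rule inj_onI)
        fix x y assume x: "x \<in> {..<?n}" and y: "y \<in> {..<?n}" and e: "\<beta> x = \<beta> y"
        show "x = y"
        proof (rule linorder_cases[of x y])
          assume "x < y" then have "\<beta> x < \<beta> y" using bmono y by simp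
          then show ?thesis using e by simp
        next
          assume "y < x" then have "\<beta> y < \<beta> x" using bmono x by simp
          then show ?thesis using e by simp
        qed
      qed
      have cB: "card B = ?n" unfolding B_def using injb by (simp add: card_image)
      have Bsub: "B \<subseteq> {..<?m}" unfolding B_def using bj by auto
      have rankB: "card {c \<in> B. c < \<beta> j} = j" if "j < ?n" for j
      proof -
        have "{c \<in> B. c < \<beta> j} = \<beta> ` {..<j}"
        proof
          show "{c \<in> B. c < \<beta> j} \<subseteq> \<beta> ` {..<j}"
          proof
            fix c assume "c \<in> {c \<in> B. c < \<beta> j}"
            then obtain k where k: "k < ?n" "c = \<beta> k" "\<beta> k < \<beta> j" unfolding B_def by auto
            have "k < j"
            proof (rule ccontr)
              assume "\<not> k < j"
              then have "k = j \<or> j < k" by auto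
              then show False
              proof
                assume "k = j" then show False using k by simp
              next
                assume "j < k" then have "\<beta> j < \<beta> k" using bmono[of j k] k by simp
                then show False using k by simp
              qed
            qed
            then show "c \<in> \<beta> ` {..<j}" using k by auto
          qed
          show "\<beta> ` {..<j} \<subseteq> {c \<in> B. c < \<beta> j}"
          proof
            fix c assume "c \<in> \<beta> ` {..<j}"
            then obtain k where k: "k < j" "c = \<beta> k" by auto
            have "\<beta> k < \<beta> j" using bmono[of k j] k that by simp
            moreover have "c \<in> B" unfolding B_def using k that by simp
            ultimately show "c \<in> {c \<in> B. c < \<beta> j}" using k by simp
          qed
        qed
        moreover have "inj_on \<beta> {..<j}" using that by (intro inj_on_subset[OF injb]) auto
        ultimately show ?thesis by (simp add: card_image)
      qed
      have cpB: "\<forall>b \<in> B. compat (ys ! ((i + card {c \<in> B. c < b}) mod ?n)) (xs ! b)"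
      proof
        fix b assume "b \<in> B"
        then obtain j where j: "j < ?n" "b = \<beta> j" unfolding B_def by auto
        show "compat (ys ! ((i + card {c \<in> B. c < b}) mod ?n)) (xs ! b)"
          using rankB[OF j(1)] bcomp[of j] j by simp
      qed
      define \<phi> where "\<phi> = constr ys i B"
      note cm = constr_mono[OF m3 n3 Bsub cB cpB, folded \<phi>_def]
      have phiM: "\<phi> \<in> Mon1 xs ys i" unfolding Mon1_def using cm by auto
      have "mon_ge xs ys \<Phi> \<phi>" using PhiMax phiM by blast
      then have ge: "alpha xs ys \<Phi> ! (?n - 1) \<le> alpha xs ys \<phi> ! (?n - 1)"
        unfolding mon_ge_def using n0 by simp
      have finB: "finite B" using finite_subset[OF Bsub] by simp
      have cSB: "card (Suc ` B) = ?n" using cB by (simp add: card_image)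
      have "sorted_list_of_set (Suc ` B) ! (?n - 1) \<in> Suc ` B"
        by (rule sorted_nth_in[OF _ cSB]) (use finB n0 in simp_all)
      then have "alpha xs ys \<phi> ! (?n - 1) \<in> Suc ` B"
        unfolding alpha_def incr_edges_incpos cm(3) .
      then obtain j where j: "j < ?n" "alpha xs ys \<phi> ! (?n - 1) = Suc (\<beta> j)"
        unfolding B_def by auto
      have "\<beta> j \<le> \<beta> (?n - 1)"
      proof (cases "j = ?n - 1")
        case True then show ?thesis by simp
      next
        case False then have "j < ?n - 1" using j by simp
        then show ?thesis using bmono[of j "?n - 1"] by simp
      qed
      then have "alpha xs ys \<phi> ! (?n - 1) \<le> Suc (\<beta> (?n - 1))" using j by simp
      define p where "p = \<beta> ?n"
      have pm: "p < ?m" unfolding p_def using bj by auto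
      have Pp: "b < p" if "b \<in> P" for b
      proof -
        have cSP: "card (Suc ` P) = ?n" using cP by (simp add: card_image)
        have "Suc b \<le> sorted_list_of_set (Suc ` P) ! (?n - 1)"
          by (rule sorted_last_ge[OF _ cSP n0]) (use finP that in simp_all)
        then have "Suc b \<le> alpha xs ys \<Phi> ! (?n - 1)"
          unfolding alpha_def incr_edges_incpos P_def[symmetric] .
        also have "\<dots> \<le> Suc (\<beta> (?n - 1))" using ge \<open>alpha xs ys \<phi> ! (?n - 1) \<le> Suc (\<beta> (?n - 1))\<close> by linarith
        finally have "b \<le> \<beta> (?n - 1)" by simp
        also have "\<dots> < p" unfolding p_def using bmono[of "?n - 1" ?n] n0 by simp
        finally show ?thesis .
      qed
      define q where "q = Min P"
      have qP: "q \<in> P" unfolding q_def using finP Pne by simp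
      have qmin: "q \<le> b" if "b \<in> P" for b unfolding q_def using finP that by simp
      have qp: "q < p" using Pp qP by simp
      have pnP: "p \<notin> P" using Pp by blast
      define B' where "B' = insert p (P - {q})"
      have finB': "finite B'" unfolding B'_def using finP by simp
      have cB': "card B' = ?n" unfolding B'_def using finP pnP qP cP n0 by (simp add: card_Diff_singleton)
      have B'sub: "B' \<subseteq> {..<?m}" unfolding B'_def using Psub pm by auto
      have cnt_low: "card {c \<in> B'. c < v} = 0" if "v \<le> q" for v
      proof -
        have "\<not> c < v" if c: "c \<in> B'" for c
        proof (cases "c = p")
          case True then show ?thesis using qp \<open>v \<le> q\<close> by simp
        next
          case False
          then have "c \<in> P" "c \<noteq> q" using c unfolding B'_def by auto
          then have "q < c" using qmin[of c] by simp
          then show ?thesis using \<open>v \<le> q\<close> by simp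
        qed
        then have "{c \<in> B'. c < v} = {}" by blast
        then show ?thesis by simp
      qed
      have cnt_high: "card {c \<in> B'. c < v} = ?n" if "p < v" for v
      proof -
        have "c < v" if c: "c \<in> B'" for c
        proof (cases "c = p")
          case True then show ?thesis using \<open>p < v\<close> by simp
        next
          case False
          then have "c \<in> P" using c unfolding B'_def by auto
          then show ?thesis using Pp[of c] \<open>p < v\<close> by simp
        qed
        then have "{c \<in> B'. c < v} = B'" by blast
        then show ?thesis using cB' by simp
      qed
      have cnt_mid: "card {c \<in> B'. c < v} + 1 = card {b \<in> P. b < v}" if "q < v" "v \<le> p" for v
      proof -
        have "{c \<in> B'. c < v} = {b \<in> P. b < v} - {q}"
        proof (intro set_eqI iffI)
          fix c assume "c \<in> {c \<in> B'. c < v}"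
          then have c: "c \<in> B'" "c < v" by auto
          then have "c \<noteq> p" using that by auto
          then show "c \<in> {b \<in> P. b < v} - {q}" using c unfolding B'_def by auto
        next
          fix c assume "c \<in> {b \<in> P. b < v} - {q}"
          then show "c \<in> {c \<in> B'. c < v}" unfolding B'_def by auto
        qed
        moreover have qin: "q \<in> {b \<in> P. b < v}" using qP that by simp
        moreover have fin: "finite {b \<in> P. b < v}" using finP by simp
        ultimately have e1: "card {c \<in> B'. c < v} = card {b \<in> P. b < v} - 1"
          by (simp add: card_Diff_singleton)
        have "card {b \<in> P. b < v} \<noteq> 0" using qin fin by auto
        then show ?thesis using e1 by linarith
      qed
      have cnt_p: "card {c \<in> B'. c < p} = ?n - 1"
      proof -
        have "{c \<in> B'. c < p} = P - {q}" unfolding B'_def using Pp by blast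
        then show ?thesis using cP qP finP by (simp add: card_Diff_singleton)
      qed
      have cpB': "\<forall>b \<in> B'. compat (ys ! ((i + 1 + card {c \<in> B'. c < b}) mod ?n)) (xs ! b)"
      proof
        fix b assume b: "b \<in> B'"
        show "compat (ys ! ((i + 1 + card {c \<in> B'. c < b}) mod ?n)) (xs ! b)"
        proof (cases "b = p")
          case True
          have cc: "i + 1 + card {c \<in> B'. c < b} = i + ?n" unfolding True cnt_p using n0 by linarith
          have e: "(i + 1 + card {c \<in> B'. c < b}) mod ?n = (i + ?n) mod ?n" by (simp only: cc)
          have e2: "(i + 1 + card {c \<in> B'. c < b}) mod ?n = i mod ?n" using e by simp
          have "compat (ys ! (i mod ?n)) (xs ! b)" using bcomp[of ?n] True p_def by simp
          then show ?thesis unfolding e2 .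
        next
          case False
          then have bP: "b \<in> P" "b \<noteq> q" using b unfolding B'_def by auto
          have "q < b" using qmin[OF bP(1)] bP(2) by simp
          moreover have "b \<le> p" using Pp[OF bP(1)] by simp
          ultimately have c: "card {c \<in> B'. c < b} + 1 = card {c \<in> P. c < b}" by (rule cnt_mid)
          have "\<Phi> b = (i mod ?n + card {c \<in> P. c < b}) mod ?n" using Pf Psub bP by auto
          also have "\<dots> = (i + 1 + card {c \<in> B'. c < b}) mod ?n" unfolding c[symmetric]
            by (simp only: mod_add_left_eq) (simp add: algebra_simps)
          finally show ?thesis using Pcomp[OF bP(1)] by simp
        qed
      qed
      define \<phi>' where "\<phi>' = constr ys (i + 1) B'"
      note cm' = constr_mono[OF m3 n3 B'sub cB' cpB', folded \<phi>'_def]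
      have phi'M: "\<phi>' \<in> Mon1 xs ys (i + 1)" unfolding Mon1_def using cm' by auto
      define a where "a = (p + 1) mod ?m"
      define l where "l = ?m - p + q"
      define S where "S = {(a + t) mod ?m | t. t < l}"
      define d where "d = i mod ?n"
      have qm: "q < ?m" using qp pm by simp
      have Schar: "S = {v. v < ?m \<and> (p < v \<or> v \<le> q)}"
      proof (cases "p + 1 < ?m")
        case True
        then have a: "a = p + 1" unfolding a_def by simp
        show ?thesis
        proof
          show "S \<subseteq> {v. v < ?m \<and> (p < v \<or> v \<le> q)}"
          proof
            fix v assume "v \<in> S"
            then obtain t where t: "t < l" "v = (a + t) mod ?m" unfolding S_def by auto
            show "v \<in> {v. v < ?m \<and> (p < v \<or> v \<le> q)}"
            proof (cases "a + t < ?m")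
              case True then show ?thesis using t a by auto
            next
              case False
              have "a + t - ?m < ?m" using t a qm pm unfolding l_def by linarith
              then have "v = a + t - ?m" using t False by (simp add: le_mod_geq)
              then show ?thesis using t a qm pm unfolding l_def by auto
            qed
          qed
          show "{v. v < ?m \<and> (p < v \<or> v \<le> q)} \<subseteq> S"
          proof
            fix v assume v: "v \<in> {v. v < ?m \<and> (p < v \<or> v \<le> q)}"
            show "v \<in> S"
            proof (cases "p < v")
              case True
              then have "v = (a + (v - p - 1)) mod ?m \<and> v - p - 1 < l" using v a unfolding l_def by auto
              then show ?thesis unfolding S_def by blast
            next
              case False
              then have vq: "v \<le> q" using v by auto
              have "a + (v + ?m - p - 1) = v + ?m" using a pm by linarith
              then have "(a + (v + ?m - p - 1)) mod ?m = (v + ?m) mod ?m" by (simp only:)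
              also have "\<dots> = v" using v by simp
              finally have "v = (a + (v + ?m - p - 1)) mod ?m \<and> v + ?m - p - 1 < l"
                using vq pm unfolding l_def by auto
              then show ?thesis unfolding S_def by blast
            qed
          qed
        qed
      next
        case False
        then have pe: "p + 1 = ?m" using pm by linarith
        then have p1: "p = ?m - 1" "a = 0" "l = 1 + q" unfolding a_def l_def by auto
        show ?thesis
        proof
          show "S \<subseteq> {v. v < ?m \<and> (p < v \<or> v \<le> q)}"
            unfolding S_def p1 using qm by auto
          show "{v. v < ?m \<and> (p < v \<or> v \<le> q)} \<subseteq> S"
          proof
            fix v assume v: "v \<in> {v. v < ?m \<and> (p < v \<or> v \<le> q)}"
            then have "v \<le> q" "v < ?m" using p1 by auto
            then have "v = (a + v) mod ?m \<and> v < l" using p1 by auto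
            then show "v \<in> S" unfolding S_def by blast
          qed
        qed
      qed
      have PhiS: "\<Phi> v = d" if "v \<in> S" for v
      proof -
        have v: "v < ?m" "p < v \<or> v \<le> q" using that Schar by auto
        from v(2) have "card {b \<in> P. b < v} = 0 \<or> card {b \<in> P. b < v} = ?n"
        proof
          assume "p < v"
          then have "b < v" if "b \<in> P" for b using Pp[OF that] by simp
          then have "{b \<in> P. b < v} = P" by blast
          then show ?thesis using cP by simp
        next
          assume "v \<le> q"
          then have "\<not> b < v" if "b \<in> P" for b using qmin[OF that] by simp
          then have "{b \<in> P. b < v} = {}" by blast
          then show ?thesis by simp
        qed
        then show ?thesis
        proof
          assume c: "card {b \<in> P. b < v} = 0"
          show ?thesis using Pf[OF v(1)] unfolding c d_def by simp
        next
          assume c: "card {b \<in> P. b < v} = ?n"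
          show ?thesis using Pf[OF v(1)] unfolding c d_def by simp
        qed
      qed
      have phi'S: "\<phi>' v = (d + 1) mod ?n" if "v \<in> S" for v
      proof -
        have v: "v < ?m" "p < v \<or> v \<le> q" using that Schar by auto
        from v(2) show ?thesis
        proof
          assume "p < v"
          then have c: "card {c \<in> B'. c < v} = ?n" by (rule cnt_high)
          have "(i + 1 + ?n) mod ?n = (i + 1) mod ?n" by (rule mod_add_self2)
          then show ?thesis unfolding \<phi>'_def constr_def d_def c by (simp add: mod_Suc_eq)
        next
          assume "v \<le> q"
          then have c: "card {c \<in> B'. c < v} = 0" by (rule cnt_low)
          show ?thesis unfolding \<phi>'_def constr_def d_def c by (simp add: mod_Suc_eq)
        qed
      qed
      have offS: "\<phi>' v = \<Phi> v" if "v < ?m" "v \<notin> S" for v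
      proof -
        have v: "q < v" "v \<le> p" using that Schar by auto
        have "\<phi>' v = (i + 1 + card {c \<in> B'. c < v}) mod ?n" unfolding \<phi>'_def constr_def by simp
        also have "\<dots> = (i + card {b \<in> P. b < v}) mod ?n" unfolding cnt_mid[OF v, symmetric]
          by (simp add: algebra_simps)
        also have "\<dots> = \<Phi> v" unfolding Pf[OF that(1)] by (simp add: mod_add_left_eq)
        finally show ?thesis .
      qed
      have zS: "0 \<in> S" using Schar qm by auto
      have imS: "\<Phi> ` S = {d}" using zS PhiS by auto
      have lbounds: "1 \<le> l" "l \<le> ?m" using qp pm unfolding l_def by auto
      have am: "a < ?m" unfolding a_def using m0 by simp
      have stat: "stationary_edge xs \<Phi> ((a + t) mod ?m + 1)" if "t + 1 < l" for t
      proof -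
        have u1: "(a + t) mod ?m \<in> S" unfolding S_def mem_Collect_eq using that
          by (intro exI[of _ t]) simp
        have u2: "(a + (t + 1)) mod ?m \<in> S" unfolding S_def mem_Collect_eq using that
          by (intro exI[of _ "t + 1"]) simp
        have "((a + t) mod ?m + 1) mod ?m = (a + (t + 1)) mod ?m" by (simp add: mod_Suc_eq)
        then show ?thesis unfolding stationary_edge_def using PhiS[OF u1] PhiS[OF u2] by simp
      qed
      have "mono_up_edge xs ys \<Phi> \<phi>'"
        unfolding mono_up_edge_def
        apply (intro conjI)
          apply (rule mwP)
         apply (rule cm'(1)[unfolded \<phi>'_def[symmetric]])
        apply (rule exI[of _ a], rule exI[of _ l], rule exI[of _ S], rule exI[of _ d])
        apply (intro conjI)
               apply (rule am)
              apply (rule lbounds(1))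
             apply (rule lbounds(2))
            apply (rule S_def)
           using stat apply blast
          apply (rule imS)
         using phi'S apply blast
        using offS by blast
      then show ?thesis using phi'M by blast
    qed
  qed
qed

end
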